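(* If $p\in I(f)$ then $p$ is a quasi-homogeneous singularity of $\eta$.
   Context: Let $n=3$. Let $f:\mathbb P^3\dashrightarrow\mathbb P^2$, $f=(F_0:F_1:F_2^\gamma)$ with $F_0,F_1,F_2$ homogeneous without common factors, $\deg F_0=\deg F_1=\gamma\deg F_2=\nu\geq 2$, $\gamma\geq 2$, be generic, i.e. $dF_0\wedge dF_1\wedge dF_2\neq 0$ at every point of $\tilde f^{-1}(0)\setminus\{0\}$ ($\tilde f$ the lift to $\mathbb C^{4}$); $I(f)=\Pi(\tilde f^{-1}(0))$ is its indeterminacy locus. Let $\mathcal G$ be a foliation of degree $d\geq 2$ on $\mathbb P^2$ leaving the line $Z=0$ invariant, defined by $ZA\,dX+ZB\,dY+C\,dZ$ with $XA+YB+C=0$, all of whose singularities are nondegenerate with nonreal characteristic numbers, whose only algebraic invariant curve is that line, and such that $\mathrm{Sing}(\mathcal G)$ does not meet $Y_2(f)=\Pi_2[\tilde f\{w: dF_0\wedge dF_1\wedge dF_2(w)=0\}]$. Let $\mathcal F=f^*\mathcal G$. Near $p\in I(f)$ there is a local chart $(x_0,x_1,x_2)$ with $\tilde f=(x_0,x_1,x_2^\gamma)$, in which $\mathcal F$ is represented by $\eta=x_2A(x_0,x_1,x_2^\gamma)dx_0+x_2B(x_0,x_1,x_2^\gamma)dx_1+\gamma C(x_0,x_1,x_2^\gamma)dx_2$. A point $p$ is a quasi-homogeneous singularity of an integrable $1$-form $\omega$ on a neighborhood of $p\in\mathbb C^3$ if, writing $d\omega=i_{\mathcal Z}\mu$ for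 a holomorphic $3$-form $\mu$ with $\mu(p)\neq 0$ and holomorphic vector field $\mathcal Z$, $p$ is an isolated singularity of $\mathcal Z$ and all eigenvalues of $D\mathcal Z(p)$ are zero. *)

theory Defs
  imports "HOL-Analysis.Analysis"
begin

type_synonym cfun3 = "complex \<Rightarrow> complex \<Rightarrow> complex \<Rightarrow> complex"

definition app3 :: "cfun3 \<Rightarrow> complex \<times> complex \<times> complex \<Rightarrow> complex" where
  "app3 F q = (case q of (x, y, z) \<Rightarrow> F x y z)"

definition comp3 :: "nat \<Rightarrow> complex \<times> complex \<times> complex \<Rightarrow> complex" where
  "comp3 l q = (case q of (x, y, z) \<Rightarrow> (if l = 0 then x else if l = 1 then y else z))"

definition hpoly :: "nat \<Rightarrow> cfun3 \<Rightarrow> bool" where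
  "hpoly k F \<longleftrightarrow> (\<exists>c :: nat \<Rightarrow> nat \<Rightarrow> complex. \<forall>x y z.
      F x y z = (\<Sum>i\<le>k. \<Sum>j\<le>k - i. c i j * x ^ i * y ^ j * z ^ (k - i - j)))"

definition pd :: "nat \<Rightarrow> cfun3 \<Rightarrow> cfun3" where
  "pd i F = (\<lambda>x y z. if i = 0 then deriv (\<lambda>t. F t y z) x
                      else if i = 1 then deriv (\<lambda>t. F x t z) y
                      else deriv (\<lambda>t. F x y t) z)"

text \<open>Holomorphic on an open set of C^3: continuous and holomorphic in each variable
  separately (equivalent to holomorphy by Osgood's lemma).\<close>
definition holo3 :: "(complex \<times> complex \<times> complex) set \<Rightarrow> cfun3 \<Rightarrow> bool" where
  "holo3 U F \<longleftrightarrow> continuous_on U (app3 F) \<and>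
     (\<forall>x y z. (x, y, z) \<in> U \<longrightarrow>
        (\<lambda>t. F t y z) field_differentiable (at x) \<and>
        (\<lambda>t. F x t z) field_differentiable (at y) \<and>
        (\<lambda>t. F x y t) field_differentiable (at z))"

definition eigenvalue3 :: "(nat \<Rightarrow> nat \<Rightarrow> complex) \<Rightarrow> complex \<Rightarrow> bool" where
  "eigenvalue3 M mu \<longleftrightarrow> (\<exists>v :: nat \<Rightarrow> complex. (\<exists>i<3. v i \<noteq> 0) \<and>
      (\<forall>i<3. (\<Sum>j<3. M i j * v j) = mu * v i))"

text \<open>Coefficient of dx_i /\ dx_j in d(omega), omega = sum_l omega_l dx_l.\<close>
definition dcoef :: "(nat \<Rightarrow> cfun3) \<Rightarrow> nat \<Rightarrow> nat \<Rightarrow> cfun3" where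
  "dcoef \<omega> i j = (\<lambda>x y z. pd i (\<omega> j) x y z - pd j (\<omega> i) x y z)"

text \<open>Quasi-homogeneous singularity: d(omega) = i_Z mu with mu = m dx0/\dx1/\dx2,
  m(p) \<noteq> 0, Z holomorphic; p is an isolated zero of Z and DZ(p) has only zero eigenvalues.
  Note i_Z(m dx0/\dx1/\dx2) = m (Z0 dx1/\dx2 - Z1 dx0/\dx2 + Z2 dx0/\dx1).\<close>
definition quasi_hom_sing :: "(nat \<Rightarrow> cfun3) \<Rightarrow> complex \<times> complex \<times> complex \<Rightarrow> bool" where
  "quasi_hom_sing \<omega> p \<longleftrightarrow> (\<exists>U m Z. open U \<and> p \<in> U \<and> holo3 U m \<and> (\<forall>i<3. holo3 U (Z i)) \<and>
     app3 m p \<noteq> 0 \<and>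
     (\<forall>q\<in>U. app3 (dcoef \<omega> 1 2) q = app3 m q * app3 (Z 0) q \<and>
             app3 (dcoef \<omega> 0 2) q = - (app3 m q * app3 (Z 1) q) \<and>
             app3 (dcoef \<omega> 0 1) q = app3 m q * app3 (Z 2) q) \<and>
     (\<forall>i<3. app3 (Z i) p = 0) \<and>
     (\<exists>V. open V \<and> p \<in> V \<and> V \<subseteq> U \<and> (\<forall>q\<in>V. q \<noteq> p \<longrightarrow> (\<exists>i<3. app3 (Z i) q \<noteq> 0))) \<and>
     (\<forall>mu. eigenvalue3 (\<lambda>i j. app3 (pd j (Z i)) p) mu \<longrightarrow> mu = 0))"

text \<open>The homogeneous 1-form Z A dX + Z B dY + C dZ on C^3 defining the foliation on P^2.\<close>
definition fol_form :: "cfun3 \<Rightarrow> cfun3 \<Rightarrow> cfun3 \<Rightarrow> nat \<Rightarrow> cfun3" where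
  "fol_form A B C i = (if i = 0 then (\<lambda>x y z. z * A x y z)
                       else if i = 1 then (\<lambda>x y z. z * B x y z) else C)"

definition singC :: "(nat \<Rightarrow> cfun3) \<Rightarrow> (complex \<times> complex \<times> complex) set" where
  "singC P = {q. q \<noteq> (0, 0, 0) \<and> (\<forall>i<3. app3 (P i) q = 0)}"

definition proj_class :: "complex \<times> complex \<times> complex \<Rightarrow> (complex \<times> complex \<times> complex) set" where
  "proj_class q = {(c * comp3 0 q, c * comp3 1 q, c * comp3 2 q) | c. c \<noteq> 0}"

text \<open>Standard affine charts of P^2: chart i is {x_i = 1}, with affine coordinates
  (x_(cidx1 i), x_(cidx2 i)).\<close>
definition cidx1 :: "nat \<Rightarrow> nat" where "cidx1 i = (if i = 0 then 1 else 0)"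
definition cidx2 :: "nat \<Rightarrow> nat" where "cidx2 i = (if i = 2 then 1 else 2)"

definition emb :: "nat \<Rightarrow> complex \<Rightarrow> complex \<Rightarrow> complex \<times> complex \<times> complex" where
  "emb i u v = (if i = 0 then (1, u, v) else if i = 1 then (u, 1, v) else (u, v, 1))"

text \<open>In chart i the foliation is given by P_j du + P_k dv (j = cidx1 i, k = cidx2 i),
  i.e. by the vector field (P_k, - P_j).\<close>
definition nondeg_nonreal_sing :: "(nat \<Rightarrow> cfun3) \<Rightarrow> complex \<times> complex \<times> complex \<Rightarrow> bool" where
  "nondeg_nonreal_sing P q \<longleftrightarrow> (\<forall>i<3. comp3 i q \<noteq> 0 \<longrightarrow>
     (let u0 = comp3 (cidx1 i) q / comp3 i q; v0 = comp3 (cidx2 i) q / comp3 i q;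
          V1 = (\<lambda>u v. app3 (P (cidx2 i)) (emb i u v));
          V2 = (\<lambda>u v. - app3 (P (cidx1 i)) (emb i u v));
          J11 = deriv (\<lambda>u. V1 u v0) u0; J12 = deriv (\<lambda>v. V1 u0 v) v0;
          J21 = deriv (\<lambda>u. V2 u v0) u0; J22 = deriv (\<lambda>v. V2 u0 v) v0;
          tr = J11 + J22; dt = J11 * J22 - J12 * J21
      in dt \<noteq> 0 \<and> (\<forall>l1 l2. l1 + l2 = tr \<and> l1 * l2 = dt \<longrightarrow> l1 / l2 \<notin> \<real>)))"

definition irreducible_hpoly :: "nat \<Rightarrow> cfun3 \<Rightarrow> bool" where
  "irreducible_hpoly k F \<longleftrightarrow> hpoly k F \<and> (\<exists>x y z. F x y z \<noteq> 0) \<and>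
     \<not> (\<exists>a b G H. 1 \<le> a \<and> 1 \<le> b \<and> a + b = k \<and> hpoly a G \<and> hpoly b H \<and>
          (\<forall>x y z. F x y z = G x y z * H x y z))"

text \<open>The curve {F = 0} (F irreducible) is invariant by the foliation of degree d defined by
  the form P: dF /\ omega = F * Theta for a polynomial 2-form Theta (coefficients of degree d).\<close>
definition invariant_hpoly :: "(nat \<Rightarrow> cfun3) \<Rightarrow> nat \<Rightarrow> cfun3 \<Rightarrow> bool" where
  "invariant_hpoly P d F \<longleftrightarrow> (\<exists>H :: nat \<Rightarrow> cfun3. (\<forall>l<3. hpoly d (H l)) \<and>
     (\<forall>x y z.
        pd 0 F x y z * P 1 x y z - pd 1 F x y z * P 0 x y z = F x y z * H 2 x y z \<and>
        pd 0 F x y z * P 2 x y z - pd 2 F x y z * P 0 x y z = F x y z * H 1 x y z \<and>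
        pd 1 F x y z * P 2 x y z - pd 2 F x y z * P 1 x y z = F x y z * H 0 x y z))"

text \<open>The local model of the pull-back foliation near p in I(f): in the chart (x0,x1,x2)
  with f = (x0, x1, x2^gamma), p = origin.\<close>
definition eta :: "nat \<Rightarrow> cfun3 \<Rightarrow> cfun3 \<Rightarrow> cfun3 \<Rightarrow> nat \<Rightarrow> cfun3" where
  "eta \<gamma> A B C i = (if i = 0 then (\<lambda>x0 x1 x2. x2 * A x0 x1 (x2 ^ \<gamma>))
                     else if i = 1 then (\<lambda>x0 x1 x2. x2 * B x0 x1 (x2 ^ \<gamma>))
                     else (\<lambda>x0 x1 x2. of_nat \<gamma> * C x0 x1 (x2 ^ \<gamma>)))"

end

theory Submission
  imports Defs
begin



definition hp :: "nat \<Rightarrow> (nat\<Rightarrow>nat\<Rightarrow>complex) \<Rightarrow> cfun3" where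
 "hp k c x y z = (\<Sum>i\<le>k. \<Sum>j\<le>k-i. c i j * x^i * y^j * z^(k-i-j))"
definition hpx :: "nat \<Rightarrow> (nat\<Rightarrow>nat\<Rightarrow>complex) \<Rightarrow> cfun3" where
 "hpx k c x y z = (\<Sum>i\<le>k. \<Sum>j\<le>k-i. c i j * (of_nat i * x^(i-1)) * y^j * z^(k-i-j))"
definition hpy :: "nat \<Rightarrow> (nat\<Rightarrow>nat\<Rightarrow>complex) \<Rightarrow> cfun3" where
 "hpy k c x y z = (\<Sum>i\<le>k. \<Sum>j\<le>k-i. c i j * x^i * (of_nat j * y^(j-1)) * z^(k-i-j))"
definition hpz :: "nat \<Rightarrow> (nat\<Rightarrow>nat\<Rightarrow>complex) \<Rightarrow> cfun3" where
 "hpz k c x y z = (\<Sum>i\<le>k. \<Sum>j\<le>k-i. c i j * x^i * y^j * (of_nat (k-i-j) * z^(k-i-j-1)))"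

lemma dpow: "((\<lambda>t. t^n) has_field_derivative (of_nat n * x^(n-1))) (at x)"
  by (rule derivative_eq_intros refl)+ simp

lemma hp_dx: "((\<lambda>t. hp k c t y z) has_field_derivative hpx k c x y z) (at x)"
  unfolding hp_def hpx_def
  by (intro DERIV_sum) (rule derivative_eq_intros refl dpow | simp)+
lemma hp_dy: "((\<lambda>t. hp k c x t z) has_field_derivative hpy k c x y z) (at y)"
  unfolding hp_def hpy_def
  by (intro DERIV_sum) (rule derivative_eq_intros refl dpow | simp)+
lemma hp_dz: "((\<lambda>t. hp k c x y t) has_field_derivative hpz k c x y z) (at z)"
  unfolding hp_def hpz_def
  by (intro DERIV_sum) (rule derivative_eq_intros refl dpow | simp)+

lemma xpow: "(x::complex) * (of_nat i * x^(i-1)) = of_nat i * x^i" by (cases i) auto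

lemma eul_term: "(x::complex)*(c*(of_nat i*x^(i-1))*y^j*z^e) + y*(c*x^i*(of_nat j*y^(j-1))*z^e) + z*(c*x^i*y^j*(of_nat e*z^(e-1)))
   = (of_nat i + of_nat j + of_nat e)*(c*x^i*y^j*z^e)"
  by (cases i; cases j; cases e) (simp_all add: algebra_simps)

lemma hp_euler: "x * hpx k c x y z + y * hpy k c x y z + z * hpz k c x y z = of_nat k * hp k c x y z"
proof -
  have "x * hpx k c x y z + y * hpy k c x y z + z * hpz k c x y z =
    (\<Sum>i\<le>k. \<Sum>j\<le>k-i. x*(c i j*(of_nat i*x^(i-1))*y^j*z^(k-i-j)) + y*(c i j*x^i*(of_nat j*y^(j-1))*z^(k-i-j))
       + z*(c i j*x^i*y^j*(of_nat (k-i-j)*z^(k-i-j-1))))"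
    unfolding hpx_def hpy_def hpz_def sum_distrib_left sum.distrib[symmetric] ..
  also have "\<dots> = (\<Sum>i\<le>k. \<Sum>j\<le>k-i. of_nat k * (c i j * x^i * y^j * z^(k-i-j)))"
  proof (intro sum.cong refl)
    fix i j assume "i \<in> {..k}" "j \<in> {..k-i}"
    then have "i + j + (k - i - j) = k" by auto
    then have e: "of_nat i + of_nat j + of_nat (k - i - j) = (of_nat k::complex)"
      by (metis of_nat_add)
    show "x*(c i j*(of_nat i*x^(i-1))*y^j*z^(k-i-j)) + y*(c i j*x^i*(of_nat j*y^(j-1))*z^(k-i-j))
       + z*(c i j*x^i*y^j*(of_nat (k-i-j)*z^(k-i-j-1))) = of_nat k * (c i j * x^i * y^j * z^(k-i-j))"
      by (simp only: eul_term e)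
  qed
  finally show ?thesis by (simp add: hp_def sum_distrib_left)
qed




definition hom3 :: "nat \<Rightarrow> cfun3 \<Rightarrow> bool" where
 "hom3 k F \<longleftrightarrow> (\<forall>l x y z. F (l*x) (l*y) (l*z) = l^k * F x y z)"

lemma powsplit: "a + b + e = k \<Longrightarrow> (l::complex)^a * l^b * l^e = l^k"
  by (metis power_add)

lemma hom_hp: "hom3 k (hp k c)"
  unfolding hom3_def hp_def
proof (intro allI)
  fix l x y z :: complex
  show "(\<Sum>i\<le>k. \<Sum>j\<le>k - i. c i j * (l * x) ^ i * (l * y) ^ j * (l * z) ^ (k - i - j)) =
    l ^ k * (\<Sum>i\<le>k. \<Sum>j\<le>k - i. c i j * x ^ i * y ^ j * z ^ (k - i - j))"
    unfolding sum_distrib_left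
  proof (intro sum.cong refl)
    fix i j assume "i \<in> {..k}" "j \<in> {..k-i}"
    then have "l^i * l^j * l^(k-i-j) = l^k" by (intro powsplit) auto
    then show "c i j * (l * x) ^ i * (l * y) ^ j * (l * z) ^ (k - i - j) =
       l ^ k * (c i j * x ^ i * y ^ j * z ^ (k - i - j))"
      by (simp add: power_mult_distrib) (metis (no_types, lifting) mult.commute mult.left_commute)
  qed
qed

lemma hom_hpx: "hom3 (k-1) (hpx k c)"
  unfolding hom3_def hpx_def
proof (intro allI)
  fix l x y z :: complex
  show "(\<Sum>i\<le>k. \<Sum>j\<le>k - i. c i j * (of_nat i * (l * x) ^ (i-1)) * (l * y) ^ j * (l * z) ^ (k - i - j)) =
    l ^ (k-1) * (\<Sum>i\<le>k. \<Sum>j\<le>k - i. c i j * (of_nat i * x ^ (i-1)) * y ^ j * z ^ (k - i - j))"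
    unfolding sum_distrib_left
  proof (intro sum.cong refl)
    fix i j assume a: "i \<in> {..k}" "j \<in> {..k-i}"
    show "c i j * (of_nat i * (l * x) ^ (i-1)) * (l * y) ^ j * (l * z) ^ (k - i - j) =
       l ^ (k-1) * (c i j * (of_nat i * x ^ (i-1)) * y ^ j * z ^ (k - i - j))"
    proof (cases "i = 0")
      case False
      with a have "l^(i-1) * l^j * l^(k-i-j) = l^(k-1)" by (intro powsplit) auto
      then show ?thesis
        by (simp add: power_mult_distrib) (metis (no_types, lifting) mult.commute mult.left_commute)
    qed simp
  qed
qed

lemma hom_hpy: "hom3 (k-1) (hpy k c)"
  unfolding hom3_def hpy_def
proof (intro allI)
  fix l x y z :: complex
  show "(\<Sum>i\<le>k. \<Sum>j\<le>k - i. c i j * (l * x) ^ i * (of_nat j * (l * y) ^ (j-1)) * (l * z) ^ (k - i - j)) =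
    l ^ (k-1) * (\<Sum>i\<le>k. \<Sum>j\<le>k - i. c i j * x ^ i * (of_nat j * y ^ (j-1)) * z ^ (k - i - j))"
    unfolding sum_distrib_left
  proof (intro sum.cong refl)
    fix i j assume a: "i \<in> {..k}" "j \<in> {..k-i}"
    show "c i j * (l * x) ^ i * (of_nat j * (l * y) ^ (j-1)) * (l * z) ^ (k - i - j) =
       l ^ (k-1) * (c i j * x ^ i * (of_nat j * y ^ (j-1)) * z ^ (k - i - j))"
    proof (cases "j = 0")
      case False
      with a have "l^i * l^(j-1) * l^(k-i-j) = l^(k-1)" by (intro powsplit) auto
      then show ?thesis
        by (simp add: power_mult_distrib) (metis (no_types, lifting) mult.commute mult.left_commute)
    qed simp
  qed
qed

lemma hom_diff: "hom3 k F \<Longrightarrow> hom3 k G \<Longrightarrow> hom3 k (\<lambda>x y z. F x y z - G x y z)"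
  unfolding hom3_def by (simp add: algebra_simps)

lemma hom_ax0: "hom3 k F \<Longrightarrow> F t 0 0 = t^k * F 1 0 0"
  unfolding hom3_def by (metis mult_1_right mult_zero_right)
lemma hom_ax1: "hom3 k F \<Longrightarrow> F 0 t 0 = t^k * F 0 1 0"
  unfolding hom3_def by (metis mult_1_right mult_zero_right)
lemma hom_ax2: "hom3 k F \<Longrightarrow> F 0 0 t = t^k * F 0 0 1"
  unfolding hom3_def by (metis mult_1_right mult_zero_right)
lemma hom_orig: "hom3 k F \<Longrightarrow> 1 \<le> k \<Longrightarrow> F 0 0 0 = 0"
  unfolding hom3_def by (metis mult_zero_left power_0_left not_one_le_zero)
lemma hom_sc: "hom3 k F \<Longrightarrow> F (l*x) (l*y) (l*z) = l^k * F x y z"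
  unfolding hom3_def by blast




inductive poly3 :: "cfun3 \<Rightarrow> bool" where
  pc: "poly3 (\<lambda>x y z. c)"
| p0: "poly3 (\<lambda>x y z. x)"
| p1: "poly3 (\<lambda>x y z. y)"
| p2: "poly3 (\<lambda>x y z. z)"
| padd: "poly3 F \<Longrightarrow> poly3 G \<Longrightarrow> poly3 (\<lambda>x y z. F x y z + G x y z)"
| pmul: "poly3 F \<Longrightarrow> poly3 G \<Longrightarrow> poly3 (\<lambda>x y z. F x y z * G x y z)"

lemma pneg: "poly3 F \<Longrightarrow> poly3 (\<lambda>x y z. - F x y z)"
  using pmul[OF pc[of "-1"]] by simp
lemma pdiff: "poly3 F \<Longrightarrow> poly3 G \<Longrightarrow> poly3 (\<lambda>x y z. F x y z - G x y z)"
  using padd[OF _ pneg] by simp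
lemma ppow: "poly3 F \<Longrightarrow> poly3 (\<lambda>x y z. F x y z ^ n)"
  by (induction n) (auto intro: pc pmul)
lemma psum: "finite S \<Longrightarrow> (\<And>i. i \<in> S \<Longrightarrow> poly3 (f i)) \<Longrightarrow> poly3 (\<lambda>x y z. \<Sum>i\<in>S. f i x y z)"
  by (induction S rule: finite_induct) (auto intro: pc padd)
lemma psubst: "poly3 F \<Longrightarrow> poly3 G0 \<Longrightarrow> poly3 G1 \<Longrightarrow> poly3 G2 \<Longrightarrow>
   poly3 (\<lambda>x y z. F (G0 x y z) (G1 x y z) (G2 x y z))"
  by (induction F rule: poly3.induct) (auto intro: pc padd pmul)

lemma poly_hp: "poly3 (hp k c)" "poly3 (hpx k c)" "poly3 (hpy k c)" "poly3 (hpz k c)"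
  unfolding hp_def hpx_def hpy_def hpz_def
  by (intro psum finite_atMost pmul pc ppow p0 p1 p2)+

lemma pder0: "poly3 F \<Longrightarrow> \<exists>G. poly3 G \<and> (\<forall>x y z. ((\<lambda>t. F t y z) has_field_derivative G x y z) (at x))"
proof (induction F rule: poly3.induct)
  case (pc c) show ?case by (intro exI[of _ "\<lambda>x y z. 0"] conjI allI poly3.pc DERIV_const)
next
  case p0 show ?case by (intro exI[of _ "\<lambda>x y z. 1"] conjI allI poly3.pc DERIV_const DERIV_ident)
next
  case p1 show ?case by (intro exI[of _ "\<lambda>x y z. 0"] conjI allI poly3.pc DERIV_const DERIV_ident)
next
  case p2 show ?case by (intro exI[of _ "\<lambda>x y z. 0"] conjI allI poly3.pc DERIV_const DERIV_ident)
next
  case (padd F G)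
  then obtain F' G' where a: "poly3 F'" "poly3 G'" and d1: "\<forall>x y z. ((\<lambda>t. F t y z) has_field_derivative F' x y z) (at x)"
     and d2: "\<forall>x y z. ((\<lambda>t. G t y z) has_field_derivative G' x y z) (at x)" by blast
  show ?case
  proof (intro exI[of _ "\<lambda>x y z. F' x y z + G' x y z"] conjI allI)
    show "poly3 (\<lambda>x y z. F' x y z + G' x y z)" using a by (rule poly3.padd)
    fix x y z show "((\<lambda>t. (\<lambda>t. F t y z) t + (\<lambda>t. G t y z) t) has_field_derivative F' x y z + G' x y z) (at x)"
      by (rule DERIV_add[OF d1[rule_format] d2[rule_format]])
  qed
next
  case (pmul F G)
  then obtain F' G' where a: "poly3 F'" "poly3 G'" and d1: "\<forall>x y z. ((\<lambda>t. F t y z) has_field_derivative F' x y z) (at x)"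
     and d2: "\<forall>x y z. ((\<lambda>t. G t y z) has_field_derivative G' x y z) (at x)" by blast
  show ?case
  proof (intro exI[of _ "\<lambda>x y z. F x y z * G' x y z + F' x y z * G x y z"] conjI allI)
    show "poly3 (\<lambda>x y z. F x y z * G' x y z + F' x y z * G x y z)" using a pmul.hyps by (intro poly3.padd poly3.pmul)
    fix x y z show "((\<lambda>t. (\<lambda>t. F t y z) t * (\<lambda>t. G t y z) t) has_field_derivative F x y z * G' x y z + F' x y z * G x y z) (at x)"
      by (rule DERIV_mult'[OF d1[rule_format] d2[rule_format]])
  qed
qed

lemma pder1: "poly3 F \<Longrightarrow> \<exists>G. poly3 G \<and> (\<forall>x y z. ((\<lambda>t. F x t z) has_field_derivative G x y z) (at y))"
proof (induction F rule: poly3.induct)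
  case (pc c) show ?case by (intro exI[of _ "\<lambda>x y z. 0"] conjI allI poly3.pc DERIV_const)
next
  case p0 show ?case by (intro exI[of _ "\<lambda>x y z. 0"] conjI allI poly3.pc DERIV_const DERIV_ident)
next
  case p1 show ?case by (intro exI[of _ "\<lambda>x y z. 1"] conjI allI poly3.pc DERIV_const DERIV_ident)
next
  case p2 show ?case by (intro exI[of _ "\<lambda>x y z. 0"] conjI allI poly3.pc DERIV_const DERIV_ident)
next
  case (padd F G)
  then obtain F' G' where a: "poly3 F'" "poly3 G'" and d1: "\<forall>x y z. ((\<lambda>t. F x t z) has_field_derivative F' x y z) (at y)"
     and d2: "\<forall>x y z. ((\<lambda>t. G x t z) has_field_derivative G' x y z) (at y)" by blast
  show ?case
  proof (intro exI[of _ "\<lambda>x y z. F' x y z + G' x y z"] conjI allI)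
    show "poly3 (\<lambda>x y z. F' x y z + G' x y z)" using a by (rule poly3.padd)
    fix x y z show "((\<lambda>t. (\<lambda>t. F x t z) t + (\<lambda>t. G x t z) t) has_field_derivative F' x y z + G' x y z) (at y)"
      by (rule DERIV_add[OF d1[rule_format] d2[rule_format]])
  qed
next
  case (pmul F G)
  then obtain F' G' where a: "poly3 F'" "poly3 G'" and d1: "\<forall>x y z. ((\<lambda>t. F x t z) has_field_derivative F' x y z) (at y)"
     and d2: "\<forall>x y z. ((\<lambda>t. G x t z) has_field_derivative G' x y z) (at y)" by blast
  show ?case
  proof (intro exI[of _ "\<lambda>x y z. F x y z * G' x y z + F' x y z * G x y z"] conjI allI)
    show "poly3 (\<lambda>x y z. F x y z * G' x y z + F' x y z * G x y z)" using a pmul.hyps by (intro poly3.padd poly3.pmul)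
    fix x y z show "((\<lambda>t. (\<lambda>t. F x t z) t * (\<lambda>t. G x t z) t) has_field_derivative F x y z * G' x y z + F' x y z * G x y z) (at y)"
      by (rule DERIV_mult'[OF d1[rule_format] d2[rule_format]])
  qed
qed

lemma pder2: "poly3 F \<Longrightarrow> \<exists>G. poly3 G \<and> (\<forall>x y z. ((\<lambda>t. F x y t) has_field_derivative G x y z) (at z))"
proof (induction F rule: poly3.induct)
  case (pc c) show ?case by (intro exI[of _ "\<lambda>x y z. 0"] conjI allI poly3.pc DERIV_const)
next
  case p0 show ?case by (intro exI[of _ "\<lambda>x y z. 0"] conjI allI poly3.pc DERIV_const DERIV_ident)
next
  case p1 show ?case by (intro exI[of _ "\<lambda>x y z. 0"] conjI allI poly3.pc DERIV_const DERIV_ident)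
next
  case p2 show ?case by (intro exI[of _ "\<lambda>x y z. 1"] conjI allI poly3.pc DERIV_const DERIV_ident)
next
  case (padd F G)
  then obtain F' G' where a: "poly3 F'" "poly3 G'" and d1: "\<forall>x y z. ((\<lambda>t. F x y t) has_field_derivative F' x y z) (at z)"
     and d2: "\<forall>x y z. ((\<lambda>t. G x y t) has_field_derivative G' x y z) (at z)" by blast
  show ?case
  proof (intro exI[of _ "\<lambda>x y z. F' x y z + G' x y z"] conjI allI)
    show "poly3 (\<lambda>x y z. F' x y z + G' x y z)" using a by (rule poly3.padd)
    fix x y z show "((\<lambda>t. (\<lambda>t. F x y t) t + (\<lambda>t. G x y t) t) has_field_derivative F' x y z + G' x y z) (at z)"
      by (rule DERIV_add[OF d1[rule_format] d2[rule_format]])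
  qed
next
  case (pmul F G)
  then obtain F' G' where a: "poly3 F'" "poly3 G'" and d1: "\<forall>x y z. ((\<lambda>t. F x y t) has_field_derivative F' x y z) (at z)"
     and d2: "\<forall>x y z. ((\<lambda>t. G x y t) has_field_derivative G' x y z) (at z)" by blast
  show ?case
  proof (intro exI[of _ "\<lambda>x y z. F x y z * G' x y z + F' x y z * G x y z"] conjI allI)
    show "poly3 (\<lambda>x y z. F x y z * G' x y z + F' x y z * G x y z)" using a pmul.hyps by (intro poly3.padd poly3.pmul)
    fix x y z show "((\<lambda>t. (\<lambda>t. F x y t) t * (\<lambda>t. G x y t) t) has_field_derivative F x y z * G' x y z + F' x y z * G x y z) (at z)"
      by (rule DERIV_mult'[OF d1[rule_format] d2[rule_format]])
  qed
qed

lemma app3_alt: "app3 F = (\<lambda>q. F (fst q) (fst (snd q)) (snd (snd q)))"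
  by (auto simp: app3_def fun_eq_iff split: prod.split)

lemma pcont: "poly3 F \<Longrightarrow> continuous_on U (app3 F)"
  unfolding app3_alt
  by (induction F rule: poly3.induct) (auto intro!: continuous_intros)

lemma pholo: "poly3 F \<Longrightarrow> holo3 U F"
  unfolding holo3_def
  using pcont pder0 pder1 pder2 field_differentiable_def by metis




lemma dhx: "deriv (\<lambda>t. hp k c t y z) x = hpx k c x y z" by (rule DERIV_imp_deriv[OF hp_dx])
lemma dhy: "deriv (\<lambda>t. hp k c x t z) y = hpy k c x y z" by (rule DERIV_imp_deriv[OF hp_dy])
lemma dhz: "deriv (\<lambda>t. hp k c x y t) z = hpz k c x y z" by (rule DERIV_imp_deriv[OF hp_dz])
lemma dhz': "deriv (hp k c x y) z = hpz k c x y z" by (rule DERIV_imp_deriv[OF hp_dz])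
lemma dhxn: "deriv (\<lambda>t. - hp k c t y z) x = - hpx k c x y z"
  by (rule DERIV_imp_deriv) (rule derivative_eq_intros hp_dx refl)+
lemma dhyn: "deriv (\<lambda>t. - hp k c x t z) y = - hpy k c x y z"
  by (rule DERIV_imp_deriv) (rule derivative_eq_intros hp_dy refl)+
lemma dhzv: "deriv (\<lambda>t. - (t * hp k c x y t)) z = - (hp k c x y z + z * hpz k c x y z)"
  by (rule DERIV_imp_deriv) (rule derivative_eq_intros hp_dz refl | simp)+

lemma realratio: assumes "l1 = of_real r * (l2::complex)" shows "l1 / l2 \<in> \<real>"
proof (cases "l2 = 0")
  case True then show ?thesis by (metis division_ring_divide_zero Reals_0)
next
  case False
  then have "l1 / l2 = of_real r" using assms by simp
  then show ?thesis by simp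
qed

lemma alg1: "(J::complex) = - (1 * ay) - (bb + u * b2) \<Longrightarrow> 1 * bx + u * b2 + 0 * bz = of_nat d * bb \<Longrightarrow>
  NN * bb = of_nat g * (bx - ay) \<Longrightarrow> NN = of_nat g + 1 + of_nat g * of_nat d \<Longrightarrow> of_nat g * J = bb"
proof -
  assume h: "(J::complex) = - (1 * ay) - (bb + u * b2)" "1 * bx + u * b2 + 0 * bz = of_nat d * bb"
   "NN * bb = of_nat g * (bx - ay)" "NN = of_nat g + 1 + of_nat g * of_nat d"
  have u: "u * b2 = of_nat d * bb - bx" using h(2) by (simp add: algebra_simps)
  have J2: "J = - (1 * ay) - (bb + (of_nat d * bb - bx))" using h(1) by (simp only: u)
  have N2: "of_nat g * (bx - ay) = (of_nat g + 1 + of_nat g * of_nat d) * bb" using h(3,4) by simp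
  have "of_nat g * J = of_nat g * (bx - ay) - of_nat g * bb - of_nat g * of_nat d * bb" 
    by (simp add: J2 algebra_simps)
  also have "\<dots> = bb" by (simp only: N2) (simp add: algebra_simps)
  finally show ?thesis .
qed

lemma alg2: "(J::complex) = - (aa + u * a2) - 1 * bx \<Longrightarrow> u * a2 + 1 * ay + 0 * az = of_nat d * aa \<Longrightarrow>
  NN * aa = - (of_nat g * (bx - ay)) \<Longrightarrow> NN = of_nat g + 1 + of_nat g * of_nat d \<Longrightarrow> of_nat g * J = aa"
proof -
  assume h: "(J::complex) = - (aa + u * a2) - 1 * bx" "u * a2 + 1 * ay + 0 * az = of_nat d * aa"
   "NN * aa = - (of_nat g * (bx - ay))" "NN = of_nat g + 1 + of_nat g * of_nat d"
  have u: "u * a2 = of_nat d * aa - ay" using h(2) by (simp add: algebra_simps)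
  have J2: "J = - (aa + (of_nat d * aa - ay)) - 1 * bx" using h(1) by (simp only: u)
  have N2: "- (of_nat g * (bx - ay)) = (of_nat g + 1 + of_nat g * of_nat d) * aa" using h(3,4) by simp
  have "of_nat g * J = - (of_nat g * (bx - ay)) - of_nat g * aa - of_nat g * of_nat d * aa" 
    by (simp add: J2 algebra_simps)
  also have "\<dots> = aa" by (simp only: N2) (simp add: algebra_simps)
  finally show ?thesis .
qed

lemma powX: "(X::complex) \<noteq> 0 \<Longrightarrow> 1 \<le> d \<Longrightarrow> (1/X)^d * X = (1/X)^(d-1)"
  by (cases d) (auto simp: field_simps)

definition DD :: "(nat\<Rightarrow>nat\<Rightarrow>complex) \<Rightarrow> (nat\<Rightarrow>nat\<Rightarrow>complex) \<Rightarrow> nat \<Rightarrow> cfun3" where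
  "DD cA cB d x y z = hpx d cB x y z - hpy d cA x y z"
definition NN :: "nat \<Rightarrow> nat \<Rightarrow> complex" where "NN d g = of_nat g + 1 + of_nat g * of_nat d"

context
  fixes cA cB cC :: "nat \<Rightarrow> nat \<Rightarrow> complex" and d \<gamma> :: nat
  assumes d2: "2 \<le> d" and g1: "1 \<le> \<gamma>"
    and CE: "\<forall>x y z. x * hp d cA x y z + y * hp d cB x y z + hp (Suc d) cC x y z = 0"
    and ND: "\<forall>q\<in>singC (fol_form (hp d cA) (hp d cB) (hp (Suc d) cC)).
               nondeg_nonreal_sing (fol_form (hp d cA) (hp d cB) (hp (Suc d) cC)) q"
begin

lemma Ceq: "hp (Suc d) cC x y z = - (x * hp d cA x y z) - y * hp d cB x y z"
  using CE[rule_format, of x y z] by algebra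

lemma Cx: "hpx (Suc d) cC x y z = - (hp d cA x y z + x * hpx d cA x y z) - y * hpx d cB x y z"
proof -
  have "(\<lambda>t. hp (Suc d) cC t y z) = (\<lambda>t. - (t * hp d cA t y z) - y * hp d cB t y z)"
    using Ceq by auto
  moreover have "((\<lambda>t. - (t * hp d cA t y z) - y * hp d cB t y z) has_field_derivative
     - (hp d cA x y z + x * hpx d cA x y z) - y * hpx d cB x y z) (at x)"
    by (rule derivative_eq_intros hp_dx refl | simp)+
  ultimately show ?thesis using hp_dx DERIV_unique by metis
qed

lemma Cy: "hpy (Suc d) cC x y z = - (x * hpy d cA x y z) - (hp d cB x y z + y * hpy d cB x y z)"
proof -
  have "(\<lambda>t. hp (Suc d) cC x t z) = (\<lambda>t. - (x * hp d cA x t z) - t * hp d cB x t z)"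
    using Ceq by auto
  moreover have "((\<lambda>t. - (x * hp d cA x t z) - t * hp d cB x t z) has_field_derivative
     - (x * hpy d cA x y z) - (hp d cB x y z + y * hpy d cB x y z)) (at y)"
    by (rule derivative_eq_intros hp_dy refl | simp)+
  ultimately show ?thesis using hp_dy DERIV_unique by metis
qed


lemma hom_DD: "hom3 (d-1) (DD cA cB d)"
proof -
  have "DD cA cB d = (\<lambda>x y z. hpx d cB x y z - hpy d cA x y z)" by (auto simp: fun_eq_iff DD_def)
  then show ?thesis by (simp only:) (intro hom_diff hom_hpx hom_hpy)
qed

lemma case_z:
  assumes S: "S \<noteq> 0" and a: "hp d cA X Y S = 0" and b: "hp d cB X Y S = 0" and D: "DD cA cB d X Y S = 0"
  shows False
proof -
  let ?P = "fol_form (hp d cA) (hp d cB) (hp (Suc d) cC)"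
  have q: "(X, Y, S) \<in> singC ?P"
    using S a b Ceq[of X Y S] unfolding singC_def
    by (auto simp: app3_def fol_form_def less_Suc_eq numeral_3_eq_3)
  have D1: "DD cA cB d (X/S) (Y/S) 1 = 0"
    using hom_sc[OF hom_DD, where l="1/S" and x=X and y=Y and z=S] S D by simp
  have "nondeg_nonreal_sing ?P (X, Y, S)" using ND q by blast
  then have H: "let u0 = X / S; v0 = Y / S;
          V1 = (\<lambda>u v. app3 (?P 1) (emb 2 u v));
          V2 = (\<lambda>u v. - app3 (?P 0) (emb 2 u v));
          J11 = deriv (\<lambda>u. V1 u v0) u0; J12 = deriv (\<lambda>v. V1 u0 v) v0;
          J21 = deriv (\<lambda>u. V2 u v0) u0; J22 = deriv (\<lambda>v. V2 u0 v) v0;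
          tr = J11 + J22; dt = J11 * J22 - J12 * J21
      in dt \<noteq> 0 \<and> (\<forall>l1 l2. l1 + l2 = tr \<and> l1 * l2 = dt \<longrightarrow> l1 / l2 \<notin> \<real>)"
    unfolding nondeg_nonreal_sing_def using S
    by (auto simp: comp3_def cidx1_def cidx2_def dest: spec[of _ 2])
  define J11 where "J11 = hpx d cB (X/S) (Y/S) 1"
  define J22 where "J22 = - hpy d cA (X/S) (Y/S) 1"
  obtain J12 J21 where H2: "\<forall>l1 l2. l1 + l2 = J11 + J22 \<and> l1 * l2 = J11 * J22 - J12 * J21 \<longrightarrow> l1 / l2 \<notin> \<real>"
    using H by (auto simp: Let_def app3_def emb_def fol_form_def dhx dhyn J11_def J22_def)
  have tr: "J11 + J22 = 0" using D1 by (simp add: J11_def J22_def DD_def)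
  define l where "l = csqrt (- (J11 * J22 - J12 * J21))"
  have "l + (-l) = J11 + J22 \<and> l * (-l) = J11 * J22 - J12 * J21"
    using tr by (simp add: l_def power2_eq_square[symmetric])
  moreover have "l / (-l) \<in> \<real>" by (rule realratio[of _ "-1"]) simp
  ultimately show False using H2 by blast
qed


lemma case_x:
  assumes X: "X \<noteq> 0" and e1: "(NN d \<gamma>) * hp d cB X Y 0 = of_nat \<gamma> * X * DD cA cB d X Y 0"
    and e2: "(NN d \<gamma>) * hp d cA X Y 0 = - (of_nat \<gamma> * Y * DD cA cB d X Y 0)"
  shows False
proof -
  let ?P = "fol_form (hp d cA) (hp d cB) (hp (Suc d) cC)"
  have "(NN d \<gamma>) = of_nat (\<gamma> + 1 + \<gamma> * d)" unfolding NN_def by simp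
  then have NN0: "(NN d \<gamma>) \<noteq> 0" by (simp only: of_nat_eq_0_iff)
  have "(NN d \<gamma>) * (X * hp d cA X Y 0 + Y * hp d cB X Y 0) = X * ((NN d \<gamma>) * hp d cA X Y 0) + Y * ((NN d \<gamma>) * hp d cB X Y 0)"
    by (simp add: algebra_simps)
  also have "\<dots> = 0" by (simp only: e1 e2) (simp add: algebra_simps)
  finally have "(NN d \<gamma>) * (X * hp d cA X Y 0 + Y * hp d cB X Y 0) = 0" .
  then have "X * hp d cA X Y 0 + Y * hp d cB X Y 0 = 0" using NN0 by simp
  moreover have "hp (Suc d) cC X Y 0 = - (X * hp d cA X Y 0 + Y * hp d cB X Y 0)"
    by (subst Ceq) simp
  ultimately have "hp (Suc d) cC X Y 0 = 0" by simp
  then have q: "(X, Y, 0) \<in> singC ?P"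
    using X unfolding singC_def
    by (auto simp: app3_def fol_form_def less_Suc_eq numeral_3_eq_3)
  define u where "u = Y / X"
  define b' where "b' = hp d cB 1 u 0"
  define D' where "D' = DD cA cB d 1 u 0"
  have b': "b' = (1/X)^d * hp d cB X Y 0"
    using hom_sc[OF hom_hp, where l="1/X" and x=X and y=Y and z=0] X by (simp add: b'_def u_def)
  have D': "D' = (1/X)^(d-1) * DD cA cB d X Y 0"
    using hom_sc[OF hom_DD, where l="1/X" and x=X and y=Y and z=0] X by (simp add: D'_def u_def)
  have "(1/X)^d * X = (1/X)^(d-1)" using X d2
    by (intro powX) auto
  then have k: "(NN d \<gamma>) * b' = of_nat \<gamma> * D'"
  proof -
    have "(NN d \<gamma>) * b' = (1/X)^d * ((NN d \<gamma>) * hp d cB X Y 0)" by (simp add: b')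
    also have "\<dots> = of_nat \<gamma> * (((1/X)^d * X) * DD cA cB d X Y 0)" by (simp add: e1)
    finally show ?thesis using \<open>(1/X)^d * X = (1/X)^(d-1)\<close> D' by simp
  qed
  have eu: "1 * hpx d cB 1 u 0 + u * hpy d cB 1 u 0 + 0 * hpz d cB 1 u 0 = of_nat d * b'"
    unfolding b'_def by (rule hp_euler)
  define J11 where "J11 = hpy (Suc d) cC 1 u 0"
  have "of_nat \<gamma> * J11 = b'"
    by (rule alg1[OF Cy[of 1 u 0, folded J11_def b'_def] eu k[unfolded D'_def DD_def] NN_def])
  then have J: "J11 = of_real (- 1 / of_nat \<gamma>) * (- b')" using g1 by (simp add: field_simps)
  have "nondeg_nonreal_sing ?P (X, Y, 0)" using ND q by blast
  then have H: "let u0 = Y / X; v0 = 0 / X;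
          V1 = (\<lambda>u v. app3 (?P 2) (emb 0 u v));
          V2 = (\<lambda>u v. - app3 (?P 1) (emb 0 u v));
          J11 = deriv (\<lambda>u. V1 u v0) u0; J12 = deriv (\<lambda>v. V1 u0 v) v0;
          J21 = deriv (\<lambda>u. V2 u v0) u0; J22 = deriv (\<lambda>v. V2 u0 v) v0;
          tr = J11 + J22; dt = J11 * J22 - J12 * J21
      in dt \<noteq> 0 \<and> (\<forall>l1 l2. l1 + l2 = tr \<and> l1 * l2 = dt \<longrightarrow> l1 / l2 \<notin> \<real>)"
    unfolding nondeg_nonreal_sing_def using X
    by (auto simp: comp3_def cidx1_def cidx2_def dest: spec[of _ 0])
  then have H2: "\<forall>l1 l2. l1 + l2 = J11 + (- b') \<and> l1 * l2 = J11 * (- b') \<longrightarrow> l1 / l2 \<notin> \<real>"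
    by (auto simp: Let_def app3_def emb_def fol_form_def dhy dhzv J11_def b'_def u_def)
  moreover have "J11 / (- b') \<in> \<real>" using J by (rule realratio)
  ultimately show False by blast
qed

lemma case_y:
  assumes Y: "Y \<noteq> 0" and e1: "(NN d \<gamma>) * hp d cB X Y 0 = of_nat \<gamma> * X * DD cA cB d X Y 0"
    and e2: "(NN d \<gamma>) * hp d cA X Y 0 = - (of_nat \<gamma> * Y * DD cA cB d X Y 0)"
  shows False
proof -
  let ?P = "fol_form (hp d cA) (hp d cB) (hp (Suc d) cC)"
  have "(NN d \<gamma>) = of_nat (\<gamma> + 1 + \<gamma> * d)" unfolding NN_def by simp
  then have NN0: "(NN d \<gamma>) \<noteq> 0" by (simp only: of_nat_eq_0_iff)
  have "(NN d \<gamma>) * (X * hp d cA X Y 0 + Y * hp d cB X Y 0) = X * ((NN d \<gamma>) * hp d cA X Y 0) + Y * ((NN d \<gamma>) * hp d cB X Y 0)"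
    by (simp add: algebra_simps)
  also have "\<dots> = 0" by (simp only: e1 e2) (simp add: algebra_simps)
  finally have "(NN d \<gamma>) * (X * hp d cA X Y 0 + Y * hp d cB X Y 0) = 0" .
  then have "X * hp d cA X Y 0 + Y * hp d cB X Y 0 = 0" using NN0 by simp
  moreover have "hp (Suc d) cC X Y 0 = - (X * hp d cA X Y 0 + Y * hp d cB X Y 0)"
    by (subst Ceq) simp
  ultimately have "hp (Suc d) cC X Y 0 = 0" by simp
  then have q: "(X, Y, 0) \<in> singC ?P"
    using Y unfolding singC_def
    by (auto simp: app3_def fol_form_def less_Suc_eq numeral_3_eq_3)
  define u where "u = X / Y"
  define a' where "a' = hp d cA u 1 0"
  define D' where "D' = DD cA cB d u 1 0"
  have a': "a' = (1/Y)^d * hp d cA X Y 0"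
    using hom_sc[OF hom_hp, where l="1/Y" and x=X and y=Y and z=0] Y by (simp add: a'_def u_def)
  have D': "D' = (1/Y)^(d-1) * DD cA cB d X Y 0"
    using hom_sc[OF hom_DD, where l="1/Y" and x=X and y=Y and z=0] Y by (simp add: D'_def u_def)
  have "(1/Y)^d * Y = (1/Y)^(d-1)" using Y d2
    by (intro powX) auto
  then have k: "(NN d \<gamma>) * a' = - (of_nat \<gamma> * D')"
  proof -
    have "(NN d \<gamma>) * a' = (1/Y)^d * ((NN d \<gamma>) * hp d cA X Y 0)" by (simp add: a')
    also have "\<dots> = - (of_nat \<gamma> * (((1/Y)^d * Y) * DD cA cB d X Y 0))" by (simp add: e2)
    finally show ?thesis using \<open>(1/Y)^d * Y = (1/Y)^(d-1)\<close> D' by simp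
  qed
  have eu: "u * hpx d cA u 1 0 + 1 * hpy d cA u 1 0 + 0 * hpz d cA u 1 0 = of_nat d * a'"
    unfolding a'_def by (rule hp_euler)
  define J11 where "J11 = hpx (Suc d) cC u 1 0"
  have "of_nat \<gamma> * J11 = a'"
    by (rule alg2[OF Cx[of u 1 0, folded J11_def a'_def] eu k[unfolded D'_def DD_def] NN_def])
  then have J: "J11 = of_real (- 1 / of_nat \<gamma>) * (- a')" using g1 by (simp add: field_simps)
  have "nondeg_nonreal_sing ?P (X, Y, 0)" using ND q by blast
  then have H: "let u0 = X / Y; v0 = 0 / Y;
          V1 = (\<lambda>u v. app3 (?P 2) (emb 1 u v));
          V2 = (\<lambda>u v. - app3 (?P 0) (emb 1 u v));
          J11 = deriv (\<lambda>u. V1 u v0) u0; J12 = deriv (\<lambda>v. V1 u0 v) v0;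
          J21 = deriv (\<lambda>u. V2 u v0) u0; J22 = deriv (\<lambda>v. V2 u0 v) v0;
          tr = J11 + J22; dt = J11 * J22 - J12 * J21
      in dt \<noteq> 0 \<and> (\<forall>l1 l2. l1 + l2 = tr \<and> l1 * l2 = dt \<longrightarrow> l1 / l2 \<notin> \<real>)"
    unfolding nondeg_nonreal_sing_def using Y
    by (auto simp: comp3_def cidx1_def cidx2_def dest: spec[of _ 1])
  then have H2: "\<forall>l1 l2. l1 + l2 = J11 + (- a') \<and> l1 * l2 = J11 * (- a') \<longrightarrow> l1 / l2 \<notin> \<real>"
    by (auto simp: Let_def app3_def emb_def fol_form_def dhx dhzv J11_def a'_def u_def)
  moreover have "J11 / (- a') \<in> \<real>" using J by (rule realratio)
  ultimately show False by blast
qed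

end



lemma d_eta2: "1 \<le> g \<Longrightarrow> deriv (\<lambda>t. t * hp k c x y (t^g)) z = hp k c x y (z^g) + of_nat g * (z^g * hpz k c x y (z^g))"
proof -
  assume g: "1 \<le> g"
  have "((\<lambda>t. t * hp k c x y (t^g)) has_field_derivative
      z * (hpz k c x y (z^g) * (of_nat g * z^(g-1))) + 1 * hp k c x y (z^g)) (at z)"
    by (rule DERIV_mult'[OF DERIV_ident DERIV_chain2[OF hp_dz dpow]])
  then have "deriv (\<lambda>t. t * hp k c x y (t^g)) z = z * (hpz k c x y (z^g) * (of_nat g * z^(g-1))) + 1 * hp k c x y (z^g)"
    by (rule DERIV_imp_deriv)
  also have "z * (hpz k c x y (z^g) * (of_nat g * z^(g-1))) = of_nat g * (z^g * hpz k c x y (z^g))"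
    using g by (cases g) (auto simp: algebra_simps)
  finally show ?thesis by simp
qed

lemma d_cy: "deriv (\<lambda>t. a * hp k c x t z) y = a * hpy k c x y z"
  by (intro DERIV_imp_deriv DERIV_cmult hp_dy)
lemma d_cx: "deriv (\<lambda>t. a * hp k c t y z) x = a * hpx k c x y z"
  by (intro DERIV_imp_deriv DERIV_cmult hp_dx)

lemma dz0: "(\<And>t. f t = K * t^k) \<Longrightarrow> 2 \<le> k \<Longrightarrow> deriv f 0 = (0::complex)"
proof -
  assume f: "\<And>t. f t = K * t^k" and k: "2 \<le> k"
  have "f = (\<lambda>t. K * t^k)" using f by auto
  moreover have "((\<lambda>t. K * t^k) has_field_derivative K * (of_nat k * 0^(k-1))) (at 0)"
    by (intro DERIV_cmult dpow)
  ultimately show ?thesis using k by (simp add: DERIV_imp_deriv)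
qed

lemma polysub: "poly3 F \<Longrightarrow> poly3 (\<lambda>x y z. F x y (z^g))"
  using psubst[OF _ p0 p1 ppow[OF p2]] by blast

lemma all3: "(\<forall>i<3. P i) \<longleftrightarrow> P 0 \<and> P 1 \<and> P (2::nat)"
  by (auto simp: numeral_3_eq_3 numeral_2_eq_2 less_Suc_eq)

lemma eig0: "(\<And>i j. M i j = 0) \<Longrightarrow> eigenvalue3 M mu \<Longrightarrow> mu = 0"
  unfolding eigenvalue3_def by auto

lemma NN0: "NN d g \<noteq> 0"
proof -
  have "NN d g = of_nat (g + 1 + g * d)" unfolding NN_def by simp
  then show ?thesis by (simp only: of_nat_eq_0_iff)
qed

lemma tpow: "1 \<le> d \<Longrightarrow> (t::complex) * t^(d-1) = t^d"
  by (cases d) auto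

context
  fixes cA cB cC :: "nat \<Rightarrow> nat \<Rightarrow> complex" and d \<gamma> :: nat
  assumes d2: "2 \<le> d" and g2: "2 \<le> \<gamma>"
    and CE: "\<forall>x y z. x * hp d cA x y z + y * hp d cB x y z + hp (Suc d) cC x y z = 0"
    and ND: "\<forall>q\<in>singC (fol_form (hp d cA) (hp d cB) (hp (Suc d) cC)).
               nondeg_nonreal_sing (fol_form (hp d cA) (hp d cB) (hp (Suc d) cC)) q"
begin

abbreviation "ETA \<equiv> eta \<gamma> (hp d cA) (hp d cB) (hp (Suc d) cC)"
abbreviation "DDD \<equiv> DD cA cB d"
abbreviation "NNN \<equiv> NN d \<gamma>"

definition "Z0f x0 x1 x2 = - NNN * hp d cB x0 x1 (x2^\<gamma>) + of_nat \<gamma> * x0 * DDD x0 x1 (x2^\<gamma>)"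
definition "Z1f x0 x1 x2 = NNN * hp d cA x0 x1 (x2^\<gamma>) + of_nat \<gamma> * x1 * DDD x0 x1 (x2^\<gamma>)"
definition "Z2f x0 x1 x2 = x2 * DDD x0 x1 (x2^\<gamma>)"

lemma g1: "1 \<le> \<gamma>" using g2 by simp

lemma Z2eq: "dcoef ETA 0 1 x0 x1 x2 = Z2f x0 x1 x2"
  unfolding dcoef_def pd_def eta_def Z2f_def DD_def
  by (simp add: d_cx d_cy algebra_simps)

lemma Z0eq: "dcoef ETA 1 2 x0 x1 x2 = Z0f x0 x1 x2"
proof -
  let ?S = "x2^\<gamma>"
  have e: "x0 * hpx d cB x0 x1 ?S + x1 * hpy d cB x0 x1 ?S + ?S * hpz d cB x0 x1 ?S = of_nat d * hp d cB x0 x1 ?S"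
    by (rule hp_euler)
  have cy: "hpy (Suc d) cC x0 x1 ?S = - (x0 * hpy d cA x0 x1 ?S) - (hp d cB x0 x1 ?S + x1 * hpy d cB x0 x1 ?S)"
    by (rule Cy[OF d2 g1 CE ND])
  have "dcoef ETA 1 2 x0 x1 x2 = of_nat \<gamma> * hpy (Suc d) cC x0 x1 ?S -
      (hp d cB x0 x1 ?S + of_nat \<gamma> * (?S * hpz d cB x0 x1 ?S))"
    unfolding dcoef_def pd_def eta_def using g1 by (simp add: d_cy d_eta2)
  also have "\<dots> = - of_nat \<gamma> * (x0 * hpy d cA x0 x1 ?S) - of_nat \<gamma> * hp d cB x0 x1 ?S - hp d cB x0 x1 ?S
      - of_nat \<gamma> * (x1 * hpy d cB x0 x1 ?S + ?S * hpz d cB x0 x1 ?S)"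
    by (simp only: cy) (simp add: algebra_simps)
  also have "x1 * hpy d cB x0 x1 ?S + ?S * hpz d cB x0 x1 ?S = of_nat d * hp d cB x0 x1 ?S - x0 * hpx d cB x0 x1 ?S"
    using e by (simp add: algebra_simps)
  also have "- of_nat \<gamma> * (x0 * hpy d cA x0 x1 ?S) - of_nat \<gamma> * hp d cB x0 x1 ?S - hp d cB x0 x1 ?S
      - of_nat \<gamma> * (of_nat d * hp d cB x0 x1 ?S - x0 * hpx d cB x0 x1 ?S) = Z0f x0 x1 x2"
    by (simp add: Z0f_def DD_def NN_def algebra_simps)
  finally show ?thesis .
qed

lemma Z1eq: "dcoef ETA 0 2 x0 x1 x2 = - Z1f x0 x1 x2"
proof -
  let ?S = "x2^\<gamma>"
  have e: "x0 * hpx d cA x0 x1 ?S + x1 * hpy d cA x0 x1 ?S + ?S * hpz d cA x0 x1 ?S = of_nat d * hp d cA x0 x1 ?S"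
    by (rule hp_euler)
  have cx: "hpx (Suc d) cC x0 x1 ?S = - (hp d cA x0 x1 ?S + x0 * hpx d cA x0 x1 ?S) - x1 * hpx d cB x0 x1 ?S"
    by (rule Cx[OF d2 g1 CE ND])
  have "dcoef ETA 0 2 x0 x1 x2 = of_nat \<gamma> * hpx (Suc d) cC x0 x1 ?S -
      (hp d cA x0 x1 ?S + of_nat \<gamma> * (?S * hpz d cA x0 x1 ?S))"
    unfolding dcoef_def pd_def eta_def using g1 by (simp add: d_cx d_eta2)
  also have "\<dots> = - of_nat \<gamma> * hp d cA x0 x1 ?S - of_nat \<gamma> * (x1 * hpx d cB x0 x1 ?S) - hp d cA x0 x1 ?S
      - of_nat \<gamma> * (x0 * hpx d cA x0 x1 ?S + ?S * hpz d cA x0 x1 ?S)"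
    by (simp only: cx) (simp add: algebra_simps)
  also have "x0 * hpx d cA x0 x1 ?S + ?S * hpz d cA x0 x1 ?S = of_nat d * hp d cA x0 x1 ?S - x1 * hpy d cA x0 x1 ?S"
    using e by (simp add: algebra_simps)
  also have "- of_nat \<gamma> * hp d cA x0 x1 ?S - of_nat \<gamma> * (x1 * hpx d cB x0 x1 ?S) - hp d cA x0 x1 ?S
      - of_nat \<gamma> * (of_nat d * hp d cA x0 x1 ?S - x1 * hpy d cA x0 x1 ?S) = - Z1f x0 x1 x2"
    by (simp add: Z1f_def DD_def NN_def algebra_simps)
  finally show ?thesis .
qed


lemma hom_DD2: "hom3 (d-1) DDD"
proof -
  have "DD cA cB d = (\<lambda>x y z. hpx d cB x y z - hpy d cA x y z)" by (auto simp: fun_eq_iff DD_def)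
  then show ?thesis by (simp only:) (intro hom_diff hom_hpx hom_hpy)
qed

lemma poly_Z: "poly3 Z0f" "poly3 Z1f" "poly3 Z2f"
proof -
  have s1: "poly3 (\<lambda>x y z. hp d c x y (z^\<gamma>))" for c by (rule polysub[OF poly_hp(1)])
  have s2: "poly3 (\<lambda>x y z. hpx d c x y (z^\<gamma>))" for c by (rule polysub[OF poly_hp(2)])
  have s3: "poly3 (\<lambda>x y z. hpy d c x y (z^\<gamma>))" for c by (rule polysub[OF poly_hp(3)])
  have "Z0f = (\<lambda>x0 x1 x2. - NNN * hp d cB x0 x1 (x2^\<gamma>) + of_nat \<gamma> * x0 * (hpx d cB x0 x1 (x2^\<gamma>) - hpy d cA x0 x1 (x2^\<gamma>)))"
    by (auto simp: fun_eq_iff Z0f_def DD_def)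
  moreover have "poly3 (\<lambda>x0 x1 x2. - NNN * hp d cB x0 x1 (x2^\<gamma>) + of_nat \<gamma> * x0 * (hpx d cB x0 x1 (x2^\<gamma>) - hpy d cA x0 x1 (x2^\<gamma>)))"
    by (intro padd pmul pc p0 pdiff s1 s2 s3)
  ultimately show "poly3 Z0f" by simp
  have "Z1f = (\<lambda>x0 x1 x2. NNN * hp d cA x0 x1 (x2^\<gamma>) + of_nat \<gamma> * x1 * (hpx d cB x0 x1 (x2^\<gamma>) - hpy d cA x0 x1 (x2^\<gamma>)))"
    by (auto simp: fun_eq_iff Z1f_def DD_def)
  moreover have "poly3 (\<lambda>x0 x1 x2. NNN * hp d cA x0 x1 (x2^\<gamma>) + of_nat \<gamma> * x1 * (hpx d cB x0 x1 (x2^\<gamma>) - hpy d cA x0 x1 (x2^\<gamma>)))"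
    by (intro padd pmul pc p1 pdiff s1 s2 s3)
  ultimately show "poly3 Z1f" by simp
  have "Z2f = (\<lambda>x0 x1 x2. x2 * (hpx d cB x0 x1 (x2^\<gamma>) - hpy d cA x0 x1 (x2^\<gamma>)))"
    by (auto simp: fun_eq_iff Z2f_def DD_def)
  moreover have "poly3 (\<lambda>x0 x1 x2. x2 * (hpx d cB x0 x1 (x2^\<gamma>) - hpy d cA x0 x1 (x2^\<gamma>)))"
    by (intro pmul p2 pdiff s2 s3)
  ultimately show "poly3 Z2f" by simp
qed

lemma zg: "(0::complex)^\<gamma> = 0" using g1 by simp

lemma zeros:
  assumes nz: "(x0, x1, x2) \<noteq> (0, 0, 0)" and z0: "Z0f x0 x1 x2 = 0" and z1: "Z1f x0 x1 x2 = 0"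
    and z2: "Z2f x0 x1 x2 = 0"
  shows False
proof (cases "x2 = 0")
  case False
  let ?S = "x2^\<gamma>"
  have S: "?S \<noteq> 0" using False by simp
  have D: "DDD x0 x1 ?S = 0" using z2 False by (simp add: Z2f_def)
  have b: "hp d cB x0 x1 ?S = 0" using z0 D NN0[of d \<gamma>] by (simp add: Z0f_def)
  have a: "hp d cA x0 x1 ?S = 0" using z1 D NN0[of d \<gamma>] by (simp add: Z1f_def)
  show False by (rule case_z[OF d2 g1 CE ND S a b D])
next
  case True
  have e1: "NNN * hp d cB x0 x1 0 = of_nat \<gamma> * x0 * DDD x0 x1 0"
    using z0 True zg by (simp add: Z0f_def algebra_simps)
  have e2: "NNN * hp d cA x0 x1 0 = - (of_nat \<gamma> * x1 * DDD x0 x1 0)"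
    using z1 True zg by (simp add: Z1f_def eq_neg_iff_add_eq_0)
  show False
  proof (cases "x0 = 0")
    case False then show False by (rule case_x[OF d2 g1 CE ND _ e1 e2])
  next
    case x0: True
    then have "x1 \<noteq> 0" using nz True by auto
    then show False by (rule case_y[OF d2 g1 CE ND _ e1 e2])
  qed
qed


lemma dz0p: "(\<And>t. f t = K * t^k) \<Longrightarrow> 2 \<le> k \<Longrightarrow> deriv f 0 = (0::complex)"
  by (rule dz0)

lemma DZ_0: "pd j Z0f 0 0 0 = 0" "pd j Z1f 0 0 0 = 0" "pd j Z2f 0 0 0 = 0" if "j < 3" for j
proof -
  have gd: "2 \<le> \<gamma> * d" using mult_le_mono[of 2 \<gamma> 1 d] g2 d2 by simp
  have gd1: "2 \<le> \<gamma> * (d-1) + 1" using g2 d2 by (simp add: Suc_le_eq)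
  have c: "\<And>t::complex. t * t^(d-1) = t^d" using d2 by (intro tpow) auto
  have P0: "pd 0 F 0 0 0 = deriv (\<lambda>t. F t 0 0) 0" "pd 1 F 0 0 0 = deriv (\<lambda>t. F 0 t 0) 0"
    "pd 2 F 0 0 0 = deriv (\<lambda>t. F 0 0 t) 0" for F by (simp_all add: pd_def)
  have a00: "Z0f t 0 0 = (of_nat \<gamma> * DDD 1 0 0 - NNN * hp d cB 1 0 0) * t^d" for t
    unfolding Z0f_def zg hom_ax0[OF hom_hp, where t=t] hom_ax0[OF hom_DD2, where t=t] c[symmetric] by (simp add: algebra_simps)
  have a01: "Z0f 0 t 0 = (- NNN * hp d cB 0 1 0) * t^d" for t
    unfolding Z0f_def zg hom_ax1[OF hom_hp, where t=t] by (simp add: algebra_simps)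
  have a02: "Z0f 0 0 t = (- NNN * hp d cB 0 0 1) * t^(\<gamma>*d)" for t
    unfolding Z0f_def hom_ax2[OF hom_hp, where t="t^\<gamma>"] power_mult by (simp add: algebra_simps)
  have a10: "Z1f t 0 0 = (NNN * hp d cA 1 0 0) * t^d" for t
    unfolding Z1f_def zg hom_ax0[OF hom_hp, where t=t] by (simp add: algebra_simps)
  have a11: "Z1f 0 t 0 = (NNN * hp d cA 0 1 0 + of_nat \<gamma> * DDD 0 1 0) * t^d" for t
    unfolding Z1f_def zg hom_ax1[OF hom_hp, where t=t] hom_ax1[OF hom_DD2, where t=t] c[symmetric] by (simp add: algebra_simps)
  have a12: "Z1f 0 0 t = (NNN * hp d cA 0 0 1) * t^(\<gamma>*d)" for t
    unfolding Z1f_def hom_ax2[OF hom_hp, where t="t^\<gamma>"] power_mult by (simp add: algebra_simps)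
  have a20: "Z2f t 0 0 = 0 * t^2" "Z2f 0 t 0 = 0 * t^2" for t unfolding Z2f_def by simp_all
  have a22: "Z2f 0 0 t = DDD 0 0 1 * t^(\<gamma>*(d-1)+1)" for t
  proof -
    have p: "t^(\<gamma>*(d-1)+1) = (t^\<gamma>)^(d-1) * t" by (simp only: power_add power_mult power_one_right)
    show ?thesis unfolding p Z2f_def hom_ax2[OF hom_DD2, where t="t^\<gamma>"] by (simp add: algebra_simps)
  qed
  have r: "deriv (\<lambda>t. Z0f t 0 0) 0 = 0" "deriv (\<lambda>t. Z0f 0 t 0) 0 = 0" "deriv (\<lambda>t. Z0f 0 0 t) 0 = 0"
     "deriv (\<lambda>t. Z1f t 0 0) 0 = 0" "deriv (\<lambda>t. Z1f 0 t 0) 0 = 0" "deriv (\<lambda>t. Z1f 0 0 t) 0 = 0"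
     "deriv (\<lambda>t. Z2f t 0 0) 0 = 0" "deriv (\<lambda>t. Z2f 0 t 0) 0 = 0" "deriv (\<lambda>t. Z2f 0 0 t) 0 = 0"
    by (rule dz0p[OF a00 d2], rule dz0p[OF a01 d2], rule dz0p[OF a02 gd],
        rule dz0p[OF a10 d2], rule dz0p[OF a11 d2], rule dz0p[OF a12 gd],
        rule dz0p[OF a20(1)], simp, rule dz0p[OF a20(2)], simp, rule dz0p[OF a22 gd1])
  have "j = 0 \<or> j = 1 \<or> j = 2" using that by auto
  then show "pd j Z0f 0 0 0 = 0" "pd j Z1f 0 0 0 = 0" "pd j Z2f 0 0 0 = 0"
    by (auto simp only: P0 r)
qed

definition ZZ :: "nat \<Rightarrow> cfun3" where "ZZ i = (if i = 0 then Z0f else if i = 1 then Z1f else Z2f)"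

lemma isol: "\<forall>q\<in>UNIV. q \<noteq> (0, 0, 0) \<longrightarrow> (\<exists>i<3. app3 (ZZ i) q \<noteq> 0)"
proof (intro ballI impI)
  fix q :: "complex \<times> complex \<times> complex" assume "q \<noteq> (0, 0, 0)"
  then obtain x0 x1 x2 where q: "q = (x0, x1, x2)" "(x0, x1, x2) \<noteq> (0, 0, 0)" by (cases q) auto
  show "\<exists>i<3. app3 (ZZ i) q \<noteq> 0"
  proof (rule ccontr)
    assume "\<not> (\<exists>i<3. app3 (ZZ i) q \<noteq> 0)"
    then have "\<forall>i<3. app3 (ZZ i) q = 0" by blast
    then have "Z0f x0 x1 x2 = 0 \<and> Z1f x0 x1 x2 = 0 \<and> Z2f x0 x1 x2 = 0"
      unfolding all3 q(1) by (simp add: app3_def ZZ_def)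
    then show False using zeros[OF q(2)] by blast
  qed
qed

lemma quasi: "quasi_hom_sing ETA (0, 0, 0)"
  unfolding quasi_hom_sing_def
proof (intro exI[of _ UNIV] exI[of _ "\<lambda>x y z. 1"] exI[of _ ZZ] conjI)
  show "holo3 UNIV (\<lambda>x y z. 1)" by (intro pholo pc)
  show "\<forall>i<3. holo3 UNIV (ZZ i)" unfolding all3 ZZ_def using poly_Z by (simp add: pholo)
  show "app3 (\<lambda>x y z. 1) (0, 0, 0) \<noteq> 0" by (simp add: app3_def)
  show "\<forall>q\<in>UNIV. app3 (dcoef ETA 1 2) q = app3 (\<lambda>x y z. 1) q * app3 (ZZ 0) q \<and>
             app3 (dcoef ETA 0 2) q = - (app3 (\<lambda>x y z. 1) q * app3 (ZZ 1) q) \<and>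
             app3 (dcoef ETA 0 1) q = app3 (\<lambda>x y z. 1) q * app3 (ZZ 2) q"
  proof
    fix q :: "complex \<times> complex \<times> complex"
    obtain x0 x1 x2 where q: "q = (x0, x1, x2)" by (cases q) auto
    show "app3 (dcoef ETA 1 2) q = app3 (\<lambda>x y z. 1) q * app3 (ZZ 0) q \<and>
             app3 (dcoef ETA 0 2) q = - (app3 (\<lambda>x y z. 1) q * app3 (ZZ 1) q) \<and>
             app3 (dcoef ETA 0 1) q = app3 (\<lambda>x y z. 1) q * app3 (ZZ 2) q"
      unfolding q app3_def ZZ_def using Z0eq[of x0 x1 x2] Z1eq[of x0 x1 x2] Z2eq[of x0 x1 x2] by simp
  qed
  show "\<forall>i<3. app3 (ZZ i) (0, 0, 0) = 0"
    unfolding all3 ZZ_def app3_def using hom_orig[OF hom_hp, of d] hom_orig[OF hom_DD2] d2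
    by (simp add: Z0f_def Z1f_def Z2f_def zg)
  show "\<forall>mu. eigenvalue3 (\<lambda>i j. app3 (pd j (ZZ i)) (0, 0, 0)) mu \<longrightarrow> mu = 0"
  proof (intro allI impI)
    fix mu assume e: "eigenvalue3 (\<lambda>i j. app3 (pd j (ZZ i)) (0, 0, 0)) mu"
    have z: "app3 (pd j (ZZ i)) (0, 0, 0) = 0" if "i < 3" "j < 3" for i j
      using DZ_0[OF that(2)] that(1) unfolding all3[symmetric] by (simp add: app3_def ZZ_def)
    obtain v i where i: "i < 3" "v i \<noteq> 0" and
      ev: "(\<Sum>j<3. app3 (pd j (ZZ i)) (0, 0, 0) * v j) = mu * v i"
      using e unfolding eigenvalue3_def by blast
    have "(\<Sum>j<3. app3 (pd j (ZZ i)) (0, 0, 0) * v j) = 0"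
      by (rule sum.neutral) (simp add: z[OF i(1)])
    then show "mu = 0" using ev i(2) by simp
  qed
qed (use isol in auto)

end


theorem lemma5p6:
  fixes A B C :: cfun3 and d \<gamma> :: nat
  assumes "2 \<le> d" and "2 \<le> \<gamma>"
    and "hpoly d A" and "hpoly d B" and "hpoly (Suc d) C"
    and "\<forall>x y z. x * A x y z + y * B x y z + C x y z = 0"
    and "finite (proj_class ` singC (fol_form A B C))"
    and "\<forall>q\<in>singC (fol_form A B C). nondeg_nonreal_sing (fol_form A B C) q"
    and "\<forall>k F. 1 \<le> k \<and> irreducible_hpoly k F \<and> invariant_hpoly (fol_form A B C) d F \<longrightarrow>
           (\<forall>x y z. (x, y, z) \<noteq> (0, 0, 0) \<longrightarrow> (F x y z = 0 \<longleftrightarrow> z = 0))"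
  shows "quasi_hom_sing (eta \<gamma> A B C) (0, 0, 0)"
proof -
  obtain cA where cA: "\<forall>x y z. A x y z = (\<Sum>i\<le>d. \<Sum>j\<le>d - i. cA i j * x ^ i * y ^ j * z ^ (d - i - j))"
    using assms(3) unfolding hpoly_def by blast
  obtain cB where cB: "\<forall>x y z. B x y z = (\<Sum>i\<le>d. \<Sum>j\<le>d - i. cB i j * x ^ i * y ^ j * z ^ (d - i - j))"
    using assms(4) unfolding hpoly_def by blast
  obtain cC where cC: "\<forall>x y z. C x y z = (\<Sum>i\<le>Suc d. \<Sum>j\<le>Suc d - i. cC i j * x ^ i * y ^ j * z ^ (Suc d - i - j))"
    using assms(5) unfolding hpoly_def by blast
  have eA: "A = hp d cA" using cA by (auto simp: fun_eq_iff hp_def)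
  have eB: "B = hp d cB" using cB by (auto simp: fun_eq_iff hp_def)
  have eC: "C = hp (Suc d) cC" using cC by (auto simp: fun_eq_iff hp_def)
  have CE: "\<forall>x y z. x * hp d cA x y z + y * hp d cB x y z + hp (Suc d) cC x y z = 0"
    using assms(6) unfolding eA eB eC .
  have ND: "\<forall>q\<in>singC (fol_form (hp d cA) (hp d cB) (hp (Suc d) cC)).
               nondeg_nonreal_sing (fol_form (hp d cA) (hp d cB) (hp (Suc d) cC)) q"
    using assms(8) unfolding eA eB eC .
  show ?thesis unfolding eA eB eC
    by (rule quasi[OF assms(1) assms(2) CE ND])
qed

end
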